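(* Let $n_1,\dots,n_m$ be positive integers, $n=n_1+\cdots+n_m$, let $\tau$ be a smooth $k$-representation of $M'=M'_{n_1,\dots,n_m}$, let $\rho$ be a subquotient of $\tau$, and let $\theta$ be a non-degenerate character of $U=U_{n_1}\times\cdots\times U_{n_m}$. If $\rho^{(n)}_\theta\neq0$, then $\tau^{(n)}_\theta\neq0$.
   Context: $F$ is a non-archimedean locally compact field of residual characteristic $p$, $k$ an algebraically closed field of characteristic $\ell\neq p$. $M_{n_1,\dots,n_m}=\mathrm{GL}_{n_1}(F)\times\cdots\times\mathrm{GL}_{n_m}(F)$ embedded block-diagonally in $\mathrm{GL}_n(F)$, and $M'_{n_1,\dots,n_m}=M_{n_1,\dots,n_m}\cap\mathrm{SL}_n(F)$. $U_{n_i}$ is the upper unitriangular subgroup of $\mathrm{GL}_{n_i}(F)$; $\theta:U\to k^\times$ is a smooth character trivial on $[U,U]$ and nontrivial on each simple root subgroup. Derivative: for $1\le s\le m$ and $2\le j\le n_s$ let $N_{s,j}\subset U$ be the subgroup of elements equal to the identity in all blocks except block $s$, where the entry is an upper unitriangular matrix whose only possibly nonzero off-diagonal entries lie in column $j$, rows $1,\dots,j-1$. List these as $N_{m,n_m},\dots,N_{m,2},N_{m-1,n_{m-1}},\dots,N_{1,2}$. For a representation on a space $E$, put $E_0=E$ and let $E_t$ be the quotient of $E_{t-1}$ by the span of $ga-\theta(g)a$, $g$ in the $t$-th group of the list, $a\in E_{t-1}$. The final quotient is the $n$-th derivative, denoted $(\cdot)^{(n)}_\theta$ (written $(\cdot)^{(n_1+\cdots+n_m)}_{\theta,m}$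 in the paper). *)

theory Defs
  imports "HOL-Analysis.Analysis" "HOL-Combinatorics.Permutations"
          "HOL-Computational_Algebra.Polynomial"
begin

definition nonarch_local_field :: "('f::field \<Rightarrow> real) \<Rightarrow> nat \<Rightarrow> bool" where
  "nonarch_local_field absv p \<longleftrightarrow>
     (\<forall>x. 0 \<le> absv x) \<and> (\<forall>x. absv x = 0 \<longleftrightarrow> x = 0) \<and>
     (\<forall>x y. absv (x * y) = absv x * absv y) \<and>
     (\<forall>x y. absv (x + y) \<le> max (absv x) (absv y)) \<and>
     (\<exists>x. absv x \<noteq> 0 \<and> absv x \<noteq> 1) \<and>
     locally_compact_space (Metric_space.mtopology UNIV (\<lambda>x y. absv (x - y))) \<and>
     prime p \<and> absv (of_nat p) < 1"

definition alg_closed_field :: "'k::field itself \<Rightarrow> bool" where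
  "alg_closed_field _ \<longleftrightarrow> (\<forall>q::'k poly. 0 < degree q \<longrightarrow> (\<exists>x. poly q x = 0))"

section \<open>Matrices of size n, as functions nat => nat => F (zero outside [0,n)^2)\<close>

type_synonym 'f mat = "nat \<Rightarrow> nat \<Rightarrow> 'f"

definition mat_one :: "nat \<Rightarrow> 'f::field mat" where
  "mat_one n i j = (if i = j \<and> i < n then 1 else 0)"

definition mat_mul :: "nat \<Rightarrow> 'f::field mat \<Rightarrow> 'f mat \<Rightarrow> 'f mat" where
  "mat_mul n A B i j = (if i < n \<and> j < n then (\<Sum>l<n. A i l * B l j) else 0)"

definition mat_det :: "nat \<Rightarrow> 'f::field mat \<Rightarrow> 'f" where
  "mat_det n A = (\<Sum>q | q permutes {..<n}. of_int (sign q) * (\<Prod>i<n. A i (q i)))"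

section \<open>Blocks for the partition n = n_1 + ... + n_m (ns = [n_1,...,n_m], 0-indexed blocks)\<close>

definition offs :: "nat list \<Rightarrow> nat \<Rightarrow> nat" where
  "offs ns s = sum_list (take s ns)"

definition in_block :: "nat list \<Rightarrow> nat \<Rightarrow> nat \<Rightarrow> bool" where
  "in_block ns i s \<longleftrightarrow> s < length ns \<and> offs ns s \<le> i \<and> i < offs ns s + ns ! s"

definition block_diag :: "nat list \<Rightarrow> 'f::field mat \<Rightarrow> bool" where
  "block_diag ns g \<longleftrightarrow> (\<forall>i j. g i j \<noteq> 0 \<longrightarrow> (\<exists>s. in_block ns i s \<and> in_block ns j s))"

definition Mprime :: "nat list \<Rightarrow> 'f::field mat set" where
  "Mprime ns = {g. block_diag ns g \<and> mat_det (sum_list ns) g = 1}"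

definition Uset :: "nat list \<Rightarrow> 'f::field mat set" where
  "Uset ns = {g. block_diag ns g \<and> (\<forall>i < sum_list ns. g i i = 1) \<and> (\<forall>i j. j < i \<longrightarrow> g i j = 0)}"

text \<open>N_{s,j} (s 0-indexed block, j in 2..n_s as in the paper, 1-indexed inside the block).\<close>
definition Nset :: "nat list \<Rightarrow> nat \<Rightarrow> nat \<Rightarrow> 'f::field mat set" where
  "Nset ns s j = {g \<in> Uset ns. \<forall>a b. a \<noteq> b \<and> g a b \<noteq> 0 \<longrightarrow>
                     b = offs ns s + j - 1 \<and> offs ns s \<le> a}"

definition deriv_groups :: "nat list \<Rightarrow> 'f::field mat set list" where
  "deriv_groups ns = concat (map (\<lambda>s. map (\<lambda>j. Nset ns s j) (rev [2..<Suc (ns ! s)]))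
                                 (rev [0..<length ns]))"

definition root_elt :: "nat \<Rightarrow> nat \<Rightarrow> 'f::field \<Rightarrow> 'f mat" where
  "root_elt n i x = (\<lambda>a b. mat_one n a b + (if a = i \<and> b = Suc i then x else 0))"

definition nondeg_character ::
  "('f::field \<Rightarrow> real) \<Rightarrow> nat list \<Rightarrow> ('f mat \<Rightarrow> 'k::field) \<Rightarrow> bool" where
  "nondeg_character absv ns \<theta> \<longleftrightarrow>
     (let n = sum_list ns in
      (\<forall>g \<in> Uset ns. \<theta> g \<noteq> 0) \<and>
      (\<forall>g \<in> Uset ns. \<forall>h \<in> Uset ns. \<theta> (mat_mul n g h) = \<theta> g * \<theta> h) \<and>
      (\<exists>\<epsilon>>0. \<forall>g \<in> Uset ns. (\<forall>i<n. \<forall>j<n. absv (g i j - mat_one n i j) < \<epsilon>) \<longrightarrow> \<theta> g = 1) \<and>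
      (\<forall>s < length ns. \<forall>i. offs ns s \<le> i \<and> Suc i < offs ns s + ns ! s \<longrightarrow>
          (\<exists>x. \<theta> (root_elt n i x) \<noteq> 1)))"

definition rep_M ::
  "nat list \<Rightarrow> ('k::field \<Rightarrow> 'v::ab_group_add \<Rightarrow> 'v) \<Rightarrow> ('f::field mat \<Rightarrow> 'v \<Rightarrow> 'v) \<Rightarrow> bool" where
  "rep_M ns sc act \<longleftrightarrow>
     vector_space sc \<and>
     act (mat_one (sum_list ns)) = id \<and>
     (\<forall>g \<in> Mprime ns. \<forall>h \<in> Mprime ns. act (mat_mul (sum_list ns) g h) = act g \<circ> act h) \<and>
     (\<forall>g \<in> Mprime ns. Vector_Spaces.linear sc sc (act g))"

definition smooth_representation ::
  "('f::field \<Rightarrow> real) \<Rightarrow> nat list \<Rightarrow> ('k::field \<Rightarrow> 'v::ab_group_add \<Rightarrow> 'v) \<Rightarrow> ('f mat \<Rightarrow> 'v \<Rightarrow> 'v) \<Rightarrow> bool" where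
  "smooth_representation absv ns sc act \<longleftrightarrow>
     rep_M ns sc act \<and>
     (\<forall>v. \<exists>\<epsilon>>0. \<forall>g \<in> Mprime ns.
        (\<forall>i<sum_list ns. \<forall>j<sum_list ns. absv (g i j - mat_one (sum_list ns) i j) < \<epsilon>) \<longrightarrow> act g v = v)"

text \<open>rho (on 'w) is isomorphic to W1/W2 for M'-stable subspaces W2 \<subseteq> W1 of tau (on 'v).\<close>
definition subquotient ::
  "nat list \<Rightarrow> ('k::field \<Rightarrow> 'v::ab_group_add \<Rightarrow> 'v) \<Rightarrow> ('f::field mat \<Rightarrow> 'v \<Rightarrow> 'v)
   \<Rightarrow> ('k \<Rightarrow> 'w::ab_group_add \<Rightarrow> 'w) \<Rightarrow> ('f mat \<Rightarrow> 'w \<Rightarrow> 'w) \<Rightarrow> bool" where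
  "subquotient ns sv actv sw actw \<longleftrightarrow>
    (\<exists>W1 W2 \<phi>. module.subspace sv W1 \<and> module.subspace sv W2 \<and> W2 \<subseteq> W1 \<and>
       (\<forall>g \<in> Mprime ns. actv g ` W1 \<subseteq> W1 \<and> actv g ` W2 \<subseteq> W2) \<and>
       (\<forall>x\<in>W1. \<forall>y\<in>W1. \<phi> (x + y) = \<phi> x + \<phi> y) \<and>
       (\<forall>c. \<forall>x\<in>W1. \<phi> (sv c x) = sw c (\<phi> x)) \<and>
       \<phi> ` W1 = UNIV \<and> (\<forall>x\<in>W1. \<phi> x = 0 \<longleftrightarrow> x \<in> W2) \<and>
       (\<forall>g \<in> Mprime ns. \<forall>x\<in>W1. \<phi> (actv g x) = actw g (\<phi> x)))"

text \<open>E_t = E / K_t, where K_0 = 0 and K_t is the preimage in E of the span of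
  g a - theta(g) a in E_{t-1}, i.e. K_t = span (K_{t-1} \<union> {g a - theta(g) a}).\<close>
definition deriv_kernel ::
  "('k::field \<Rightarrow> 'v::ab_group_add \<Rightarrow> 'v) \<Rightarrow> ('f::field mat \<Rightarrow> 'v \<Rightarrow> 'v) \<Rightarrow> ('f mat \<Rightarrow> 'k)
   \<Rightarrow> 'f mat set list \<Rightarrow> 'v set" where
  "deriv_kernel sc act \<theta> Ns =
     foldl (\<lambda>K N. module.span sc (K \<union> {act g a - sc (\<theta> g) a | g a. g \<in> N})) {0} Ns"

text \<open>The n-th derivative E / K_final is nonzero iff K_final is not all of E.\<close>
definition derivative_nonzero ::
  "nat list \<Rightarrow> ('k::field \<Rightarrow> 'v::ab_group_add \<Rightarrow> 'v) \<Rightarrow> ('f::field mat \<Rightarrow> 'v \<Rightarrow> 'v) \<Rightarrow> ('f mat \<Rightarrow> 'k) \<Rightarrow> bool" where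
  "derivative_nonzero ns sc act \<theta> \<longleftrightarrow> deriv_kernel sc act \<theta> (deriv_groups ns) \<noteq> UNIV"

end

theory Submission
  imports Defs
begin


definition cavg :: "('a::field \<Rightarrow> 'b::ab_group_add \<Rightarrow> 'b) \<Rightarrow> ('b \<Rightarrow> 'b) \<Rightarrow> 'a \<Rightarrow> nat \<Rightarrow> 'b \<Rightarrow> 'b" where
  "cavg sc T c r v = sc (inverse (of_nat r)) (\<Sum>i<r. sc (inverse (c ^ i)) ((T ^^ i) v))"

context vector_space begin

lemma lin_add: "Vector_Spaces.linear scale scale f \<Longrightarrow> f (x + y) = f x + f y"
  by (simp add: Vector_Spaces.linear_iff)
lemma lin_scale: "Vector_Spaces.linear scale scale f \<Longrightarrow> f (scale c x) = scale c (f x)"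
  by (simp add: Vector_Spaces.linear_iff)
lemma lin_zero: "Vector_Spaces.linear scale scale f \<Longrightarrow> f 0 = 0"
  by (metis add_cancel_right_right lin_add)
lemma lin_diff: "Vector_Spaces.linear scale scale f \<Longrightarrow> f (x - y) = f x - f y"
  by (metis add_diff_cancel lin_add diff_add_cancel)
lemma lin_sum: "Vector_Spaces.linear scale scale f \<Longrightarrow> f (sum g A) = (\<Sum>a\<in>A. f (g a))"
  by (induct A rule: infinite_finite_induct) (simp_all add: lin_zero lin_add)

lemma lin_span_into:
  assumes "Vector_Spaces.linear scale scale f" "f ` X \<subseteq> span Y"
  shows "f ` span X \<subseteq> span Y"
proof
  fix v assume "v \<in> f ` span X"
  then obtain x where x: "x \<in> span X" "v = f x" by auto
  have "f x \<in> span Y" using x(1)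
  proof (induct rule: span_induct_alt)
    case base then show ?case using lin_zero[OF assms(1)] span_zero by simp
  next
    case (step c x y)
    then show ?case using assms
      by (auto simp: lin_add lin_scale intro!: span_add span_scale)
  qed
  then show "v \<in> span Y" using x by simp
qed

lemma lin_subspace_into:
  assumes "Vector_Spaces.linear scale scale f" "f ` X \<subseteq> X" "subspace X"
  shows "f ` X \<subseteq> X"
  using assms by simp

lemma lin_funpow: "Vector_Spaces.linear scale scale f \<Longrightarrow> Vector_Spaces.linear scale scale (f ^^ i)"
  by (induct i) (auto simp: linear_id intro: Vector_Spaces.linear_compose)

lemma funpow_into: "f ` X \<subseteq> X \<Longrightarrow> (f ^^ i) ` X \<subseteq> X"
  by (induct i) auto

lemma funpow_comm: assumes "F \<circ> f = f \<circ> F" shows "F \<circ> (f ^^ i) = (f ^^ i) \<circ> F"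
proof -
  have h: "F (f x) = f (F x)" for x using assms by (metis comp_apply)
  have "F ((f ^^ i) x) = (f ^^ i) (F x)" for x
    by (induct i) (simp_all add: h)
  then show ?thesis by (simp add: fun_eq_iff)
qed

lemma sum_const_scale: "(\<Sum>i<r. w) = scale (of_nat r) w"
  by (induct r) (simp_all add: scale_left_distrib add.commute)


lemma avg_linear:
  assumes "Vector_Spaces.linear scale scale T"
  shows "Vector_Spaces.linear scale scale (cavg scale T c r)"
proof -
  have L: "Vector_Spaces.linear scale scale (T ^^ i)" for i using lin_funpow[OF assms] .
  show ?thesis unfolding Vector_Spaces.linear_iff
  proof (intro conjI allI)
    show "vector_space scale" by (rule vector_space_axioms)
    show "vector_space scale" by (rule vector_space_axioms)
    fix x y show "cavg scale T c r (x + y) = cavg scale T c r x + cavg scale T c r y"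
      unfolding cavg_def by (simp add: lin_add[OF L] scale_right_distrib sum.distrib)
  next
    fix d x show "cavg scale T c r (scale d x) = scale d (cavg scale T c r x)"
      unfolding cavg_def by (simp add: lin_scale[OF L] scale_sum_right ac_simps)
  qed
qed

lemma avg_into:
  assumes "subspace S" "T ` S \<subseteq> S" "x \<in> S"
  shows "cavg scale T c r x \<in> S"
  unfolding cavg_def
  using funpow_into[OF assms(2)] assms
  by (intro subspace_scale subspace_sum) auto

lemma avg_comm:
  assumes "Vector_Spaces.linear scale scale F" "F \<circ> T = T \<circ> F"
  shows "F \<circ> cavg scale T c r = cavg scale T c r \<circ> F"
proof -
  have h: "F ((T ^^ i) x) = (T ^^ i) (F x)" for i x
    using funpow_comm[OF assms(2), of i] by (metis comp_apply)
  show ?thesis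
    by (simp add: fun_eq_iff cavg_def lin_scale[OF assms(1)] lin_sum[OF assms(1)] h)
qed

lemma avg_kill:
  assumes L: "Vector_Spaces.linear scale scale T" and c: "c \<noteq> 0"
    and tor: "(T ^^ r) a = scale (c ^ r) a"
  shows "cavg scale T c r (T a - scale c a) = 0"
proof -
  define d where "d i = scale (inverse (c ^ i)) ((T ^^ i) a)" for i
  have L': "Vector_Spaces.linear scale scale (T ^^ i)" for i using lin_funpow[OF L] .
  have t: "scale (inverse (c ^ i)) ((T ^^ i) (T a - scale c a)) = scale c (d (Suc i) - d i)" for i
  proof -
    have "(T ^^ i) (T a) = (T ^^ Suc i) a" by (simp add: funpow_swap1)
    moreover have "inverse (c ^ i) = c * inverse (c ^ Suc i)" using c by (simp add: field_simps)
    ultimately show ?thesis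
      unfolding d_def using c
      by (simp add: lin_diff[OF L'] lin_scale[OF L'] scale_right_diff_distrib mult.commute)
  qed
  have "(\<Sum>i<r. scale (inverse (c ^ i)) ((T ^^ i) (T a - scale c a))) = scale c (d r - d 0)"
    by (simp add: t scale_sum_right[symmetric] sum_lessThan_telescope)
  also have "d r - d 0 = 0" unfolding d_def using c tor by simp
  finally show ?thesis unfolding cavg_def by simp
qed

lemma pow_diff_in:
  assumes L: "Vector_Spaces.linear scale scale T" and K: "subspace K" "T ` K \<subseteq> K"
    and w: "T w - scale c w \<in> K"
  shows "(T ^^ i) w - scale (c ^ i) w \<in> K"
proof (induct i)
  case 0 then show ?case using subspace_0[OF K(1)] by simp
next
  case (Suc i)
  have "(T ^^ Suc i) w - scale (c ^ Suc i) w
      = T ((T ^^ i) w - scale (c ^ i) w) + scale (c ^ i) (T w - scale c w)"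
    by (simp add: lin_diff[OF L] lin_scale[OF L] scale_right_diff_distrib mult.commute)
  then show ?case using Suc K w
    by (auto intro!: subspace_add subspace_scale)
qed

lemma avg_diff_in:
  assumes L: "Vector_Spaces.linear scale scale T" and K: "subspace K" "T ` K \<subseteq> K"
    and w: "T w - scale c w \<in> K" and c: "c \<noteq> 0" and r: "(of_nat r :: 'a) \<noteq> 0"
  shows "w - cavg scale T c r w \<in> K"
proof -
  have w1: "w = scale (inverse (of_nat r)) (\<Sum>i<r. w)" using r by (simp add: sum_const_scale)
  have "scale (inverse (of_nat r)) (\<Sum>i<r. w - scale (inverse (c ^ i)) ((T ^^ i) w))
      = scale (inverse (of_nat r)) (\<Sum>i<r. w) - scale (inverse (of_nat r)) (\<Sum>i<r. scale (inverse (c ^ i)) ((T ^^ i) w))"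
    by (simp add: sum_subtractf scale_right_diff_distrib)
  then have eq: "w - cavg scale T c r w = scale (inverse (of_nat r)) (\<Sum>i<r. w - scale (inverse (c ^ i)) ((T ^^ i) w))"
    unfolding cavg_def using w1 by simp
  have trm: "w - scale (inverse (c ^ i)) ((T ^^ i) w) = - scale (inverse (c ^ i)) ((T ^^ i) w - scale (c ^ i) w)" for i
    using c by (simp add: scale_right_diff_distrib)
  have "scale (inverse (of_nat r)) (\<Sum>i<r. w - scale (inverse (c ^ i)) ((T ^^ i) w)) \<in> K"
    unfolding trm using pow_diff_in[OF L K w] K(1)
    by (intro subspace_scale subspace_sum subspace_neg) auto
  then show ?thesis using eq by simp
qed

end

locale exloc = vector_space sc for sc :: "'k::field \<Rightarrow> 'v::ab_group_add \<Rightarrow> 'v" +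
  fixes act :: "'g \<Rightarrow> 'v \<Rightarrow> 'v" and th :: "'g \<Rightarrow> 'k"
begin

definition gens :: "'g set \<Rightarrow> 'v set \<Rightarrow> 'v set" where
  "gens S Y = {act g a - sc (th g) a | g a. g \<in> S \<and> a \<in> Y}"

definition abel :: "'g set \<Rightarrow> 'v set \<Rightarrow> bool" where
  "abel C W1 \<longleftrightarrow> (\<forall>g\<in>C. Vector_Spaces.linear sc sc (act g) \<and> th g \<noteq> 0 \<and> act g ` W1 \<subseteq> W1) \<and>
     (\<forall>g\<in>C. \<forall>h\<in>C. \<exists>k\<in>C. act g \<circ> act h = act k \<and> th k = th g * th h) \<and>
     (\<forall>g\<in>C. \<forall>h\<in>C. act g \<circ> act h = act h \<circ> act g) \<and>
     (\<forall>g\<in>C. \<forall>a. \<exists>r. of_nat r \<noteq> (0::'k) \<and> (act g ^^ r) a = sc (th g ^ r) a)"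

definition normz :: "'g set \<Rightarrow> 'g set \<Rightarrow> bool" where
  "normz D C \<longleftrightarrow> (\<forall>h\<in>D. \<forall>g\<in>C. \<exists>g'\<in>C. act h \<circ> act g = act g' \<circ> act h \<and> th g' = th g)"

definition good :: "'g set \<Rightarrow> 'v set \<Rightarrow> 'v set \<Rightarrow> ('v \<Rightarrow> 'v) \<Rightarrow> bool" where
  "good C W1 Z E \<longleftrightarrow> Vector_Spaces.linear sc sc E \<and> E ` Z \<subseteq> Z \<and> E ` W1 \<subseteq> W1 \<and>
     E ` span (gens C W1) \<subseteq> span (gens C W1) \<and> (\<forall>w\<in>W1. w - E w \<in> span (gens C W1)) \<and>
     (\<forall>h\<in>C. E \<circ> act h = act h \<circ> E) \<and>
     (\<forall>F. Vector_Spaces.linear sc sc F \<and> (\<forall>h\<in>C. F \<circ> act h = act h \<circ> F) \<longrightarrow> E \<circ> F = F \<circ> E)"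

lemma good_id: "good C W1 Z id"
  unfolding good_def by (auto simp: linear_id span_zero)

lemma good_comp:
  assumes G1: "good C W1 Z E1" and G2: "good C W1 Z E2"
  shows "good C W1 Z (E1 \<circ> E2)"
proof -
  have L1: "Vector_Spaces.linear sc sc E1" and Z1: "E1 ` Z \<subseteq> Z" and W1: "E1 ` W1 \<subseteq> W1"
    and K1: "E1 ` span (gens C W1) \<subseteq> span (gens C W1)" and D1: "\<forall>w\<in>W1. w - E1 w \<in> span (gens C W1)"
    and C1: "\<forall>h\<in>C. E1 \<circ> act h = act h \<circ> E1"
    and B1: "\<forall>F. Vector_Spaces.linear sc sc F \<and> (\<forall>h\<in>C. F \<circ> act h = act h \<circ> F) \<longrightarrow> E1 \<circ> F = F \<circ> E1"
    using G1 unfolding good_def by simp_all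
  have L2: "Vector_Spaces.linear sc sc E2" and Z2: "E2 ` Z \<subseteq> Z" and W2: "E2 ` W1 \<subseteq> W1"
    and K2: "E2 ` span (gens C W1) \<subseteq> span (gens C W1)" and D2: "\<forall>w\<in>W1. w - E2 w \<in> span (gens C W1)"
    and C2: "\<forall>h\<in>C. E2 \<circ> act h = act h \<circ> E2"
    and B2: "\<forall>F. Vector_Spaces.linear sc sc F \<and> (\<forall>h\<in>C. F \<circ> act h = act h \<circ> F) \<longrightarrow> E2 \<circ> F = F \<circ> E2"
    using G2 unfolding good_def by simp_all
  have a: "w - (E1 \<circ> E2) w \<in> span (gens C W1)" if "w \<in> W1" for w
  proof -
    have d: "E1 (w - E2 w) = E1 w - E1 (E2 w)" by (rule lin_diff[OF L1])
    have "w - (E1 \<circ> E2) w = (w - E1 w) + E1 (w - E2 w)" by (simp add: d algebra_simps)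
    moreover have "w - E1 w \<in> span (gens C W1)" using D1 that by blast
    moreover have "E1 (w - E2 w) \<in> span (gens C W1)" using D2 K1 that by blast
    ultimately show ?thesis by (metis span_add)
  qed
  have c: "(E1 \<circ> E2) \<circ> act h = act h \<circ> (E1 \<circ> E2)" if "h \<in> C" for h
  proof -
    have "(E1 \<circ> E2) \<circ> act h = E1 \<circ> (E2 \<circ> act h)" by (simp add: o_assoc)
    also have "\<dots> = E1 \<circ> (act h \<circ> E2)" using C2 that by simp
    also have "\<dots> = (E1 \<circ> act h) \<circ> E2" by (simp add: o_assoc)
    also have "\<dots> = (act h \<circ> E1) \<circ> E2" using C1 that by simp
    finally show ?thesis by (simp add: o_assoc)
  qed
  have b: "(E1 \<circ> E2) \<circ> F = F \<circ> (E1 \<circ> E2)"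
    if "Vector_Spaces.linear sc sc F \<and> (\<forall>h\<in>C. F \<circ> act h = act h \<circ> F)" for F
  proof -
    have e1: "E1 \<circ> F = F \<circ> E1" using B1 that by blast
    have e2: "E2 \<circ> F = F \<circ> E2" using B2 that by blast
    have "(E1 \<circ> E2) \<circ> F = E1 \<circ> (E2 \<circ> F)" by (simp add: o_assoc)
    also have "\<dots> = (E1 \<circ> F) \<circ> E2" by (simp add: e2 o_assoc)
    also have "\<dots> = F \<circ> (E1 \<circ> E2)" by (simp add: e1 o_assoc)
    finally show ?thesis .
  qed
  have L: "Vector_Spaces.linear sc sc (E1 \<circ> E2)" by (rule Vector_Spaces.linear_compose[OF L2 L1])
  have "(E1 \<circ> E2) ` Z \<subseteq> Z" using Z1 Z2 by (auto simp: image_subset_iff)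
  moreover have "(E1 \<circ> E2) ` W1 \<subseteq> W1" using W1 W2 by (auto simp: image_subset_iff)
  moreover have "(E1 \<circ> E2) ` span (gens C W1) \<subseteq> span (gens C W1)"
    using K1 K2 by (auto simp: image_subset_iff)
  ultimately show ?thesis unfolding good_def using L a b c by blast
qed

lemma gens_stable:
  assumes "abel C W1" "g \<in> C"
  shows "act g ` span (gens C W1) \<subseteq> span (gens C W1)"
proof -
  have L: "Vector_Spaces.linear sc sc (act g)" using assms by (auto simp: abel_def)
  have "act g ` gens C W1 \<subseteq> span (gens C W1)"
  proof
    fix v assume "v \<in> act g ` gens C W1"
    then obtain h a where ha: "h \<in> C" "a \<in> W1" "v = act g (act h a - sc (th h) a)"
      by (auto simp: gens_def)
    have "\<forall>g\<in>C. \<forall>h\<in>C. \<exists>k\<in>C. act g \<circ> act h = act k \<and> th k = th g * th h"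
      using assms(1) by (simp add: abel_def)
    then obtain k where k: "k \<in> C" "act g \<circ> act h = act k" "th k = th g * th h"
      using assms(2) ha(1) by blast
    have ga: "act g a \<in> W1" using assms ha by (auto simp: abel_def)
    have e1: "act g (act h a) = act k a" using k(2) by (metis comp_apply)
    have "v = act k a - sc (th h) (act g a)" using ha(3) e1 by (simp add: lin_diff[OF L] lin_scale[OF L])
    moreover have "(act k a - sc (th k) a) - sc (th h) (act g a - sc (th g) a) = act k a - sc (th h) (act g a)"
      using k(3) by (simp add: scale_right_diff_distrib mult.commute algebra_simps)
    ultimately have "v = (act k a - sc (th k) a) - sc (th h) (act g a - sc (th g) a)" by simp
    moreover have "act k a - sc (th k) a \<in> gens C W1" unfolding gens_def using k(1) ha(2) by blast
    moreover have "act g a - sc (th g) a \<in> gens C W1" unfolding gens_def using assms(2) ha(2) by blast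
    ultimately show "v \<in> span (gens C W1)" by (metis span_diff span_scale span_base)
  qed
  then show ?thesis by (rule lin_span_into[OF L])
qed

lemma gens_sub:
  assumes "abel C W1" "subspace W1"
  shows "span (gens C W1) \<subseteq> W1"
proof -
  have "gens C W1 \<subseteq> W1" using assms
    by (auto simp: gens_def abel_def intro!: subspace_diff subspace_scale)
  then show ?thesis by (rule span_minimal[OF _ assms(2)])
qed

lemma good_avg:
  assumes ab: "abel C W1" and W: "subspace W1" and Z: "subspace Z" "\<forall>h\<in>C. act h ` Z \<subseteq> Z"
    and g: "g \<in> C" and r: "of_nat r \<noteq> (0::'k)"
  shows "good C W1 Z (cavg sc (act g) (th g) r)"
proof -
  have L: "Vector_Spaces.linear sc sc (act g)" and c: "th g \<noteq> 0" and gW: "act g ` W1 \<subseteq> W1"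
    using ab g by (auto simp: abel_def)
  have comm: "\<forall>h\<in>C. act h \<circ> act g = act g \<circ> act h" using ab g by (auto simp: abel_def)
  have linh: "\<forall>h\<in>C. Vector_Spaces.linear sc sc (act h)" using ab by (auto simp: abel_def)
  show ?thesis unfolding good_def
  proof (intro conjI ballI allI impI)
    show "Vector_Spaces.linear sc sc (cavg sc (act g) (th g) r)" by (rule avg_linear[OF L])
    show "cavg sc (act g) (th g) r ` Z \<subseteq> Z" using avg_into[OF Z(1)] Z(2) g by blast
    show "cavg sc (act g) (th g) r ` W1 \<subseteq> W1" using avg_into[OF W gW] by blast
    show "cavg sc (act g) (th g) r ` span (gens C W1) \<subseteq> span (gens C W1)"
      using avg_into[OF subspace_span gens_stable[OF ab g]] by blast
  next
    fix w assume "w \<in> W1"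
    then have "act g w - sc (th g) w \<in> span (gens C W1)" using g by (auto simp: gens_def intro!: span_base)
    then show "w - cavg sc (act g) (th g) r w \<in> span (gens C W1)"
      using avg_diff_in[OF L subspace_span gens_stable[OF ab g] _ c r] by blast
  next
    fix h assume "h \<in> C"
    then show "cavg sc (act g) (th g) r \<circ> act h = act h \<circ> cavg sc (act g) (th g) r"
      using avg_comm[of "act h" "act g"] comm linh by metis
  next
    fix F assume "Vector_Spaces.linear sc sc F \<and> (\<forall>h\<in>C. F \<circ> act h = act h \<circ> F)"
    then show "cavg sc (act g) (th g) r \<circ> F = F \<circ> cavg sc (act g) (th g) r"
      using avg_comm[of F "act g"] g by metis
  qed
qed

lemma kill_exists:
  assumes ab: "abel C W1" and W: "subspace W1" and Z: "subspace Z" "\<forall>h\<in>C. act h ` Z \<subseteq> Z"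
    and y: "y \<in> span (gens C UNIV)"
  shows "\<exists>E. good C W1 Z E \<and> E y = 0"
  using y
proof (induct rule: span_induct_alt)
  case base
  then show ?case by (metis good_id id_apply)
next
  case (step c x y)
  then obtain E where E: "good C W1 Z E" "E y = 0" by blast
  from step(1) obtain g a where ga: "g \<in> C" "x = act g a - sc (th g) a" by (auto simp: gens_def)
  have "\<forall>g\<in>C. \<forall>a. \<exists>r. of_nat r \<noteq> (0::'k) \<and> (act g ^^ r) a = sc (th g ^ r) a"
    using ab by (simp add: abel_def)
  then obtain r where r: "of_nat r \<noteq> (0::'k)" "(act g ^^ r) a = sc (th g ^ r) a"
    using ga(1) by blast
  have L: "Vector_Spaces.linear sc sc (act g)" and c: "th g \<noteq> 0"
    using ab ga by (auto simp: abel_def)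
  let ?e = "cavg sc (act g) (th g) r"
  have ge: "good C W1 Z ?e" by (rule good_avg[OF ab W Z ga(1) r(1)])
  have ex: "?e x = 0" using avg_kill[OF L c r(2)] ga by simp
  have LE: "Vector_Spaces.linear sc sc E" using E by (simp add: good_def)
  have Le: "Vector_Spaces.linear sc sc ?e" using ge by (simp add: good_def)
  have ce: "\<forall>h\<in>C. ?e \<circ> act h = act h \<circ> ?e" using ge by (simp add: good_def)
  have bic: "\<forall>F. Vector_Spaces.linear sc sc F \<and> (\<forall>h\<in>C. F \<circ> act h = act h \<circ> F) \<longrightarrow> E \<circ> F = F \<circ> E"
    using E(1) by (simp add: good_def)
  have "E \<circ> ?e = ?e \<circ> E" using bic[rule_format, OF conjI[OF Le ce]] .
  then have "E (?e x) = ?e (E x)" by (metis comp_apply)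
  then have "(?e \<circ> E) (sc c x + y) = 0"
    using E(2) ex by (simp add: lin_add[OF LE] lin_scale[OF LE] lin_add[OF Le] lin_scale[OF Le] lin_zero[OF Le] lin_zero[OF LE])
  then show ?case using good_comp[OF ge E(1)] by (intro exI[of _ "?e \<circ> E"] conjI)
qed

lemma abel_step:
  assumes ab: "abel C W1" and W: "subspace W1" and Z: "subspace Z" "\<forall>h\<in>C. act h ` Z \<subseteq> Z"
    and x: "x \<in> W1" "x = y + z" and y: "y \<in> span (gens C UNIV)" and z: "z \<in> Z"
  shows "\<exists>k z'. k \<in> span (gens C W1) \<and> z' \<in> Z \<and> x = k + z'"
proof -
  obtain E where E: "good C W1 Z E" "E y = 0" using kill_exists[OF ab W Z y] by blast
  have LE: "Vector_Spaces.linear sc sc E" using E by (simp add: good_def)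
  have "E x = E z" using x E(2) by (simp add: lin_add[OF LE])
  then have "E x \<in> Z" using E(1) z by (auto simp: good_def)
  moreover have "x - E x \<in> span (gens C W1)" using E(1) x by (auto simp: good_def)
  moreover have "x = (x - E x) + E x" by simp
  ultimately show ?thesis by (intro exI[of _ "x - E x"] exI[of _ "E x"] conjI)
qed

lemma gens_Un: "gens (A \<union> B) Y = gens A Y \<union> gens B Y"
  unfolding gens_def by blast

lemma gens_empty[simp]: "gens {} Y = {}"
  unfolding gens_def by blast

lemma normz_span:
  assumes "normz D C" "h \<in> D" "Vector_Spaces.linear sc sc (act h)"
  shows "act h ` span (gens C UNIV) \<subseteq> span (gens C UNIV)"
proof -
  have "act h ` gens C UNIV \<subseteq> gens C UNIV"
  proof
    fix v assume "v \<in> act h ` gens C UNIV"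
    then obtain g a where ga: "g \<in> C" "v = act h (act g a - sc (th g) a)" by (auto simp: gens_def)
    obtain g' where g': "g' \<in> C" "act h \<circ> act g = act g' \<circ> act h" "th g' = th g"
      using assms(1,2) ga(1) unfolding normz_def by blast
    have "act h (act g a) = act g' (act h a)" using g'(2) by (metis comp_apply)
    then have "v = act g' (act h a) - sc (th g') (act h a)"
      using ga(2) g'(3) by (simp add: lin_diff[OF assms(3)] lin_scale[OF assms(3)])
    then show "v \<in> gens C UNIV" unfolding gens_def using g'(1) by blast
  qed
  then have "act h ` gens C UNIV \<subseteq> span (gens C UNIV)" using span_superset[of "gens C UNIV"] by (rule order_trans)
  then show ?thesis by (rule lin_span_into[OF assms(3)])
qed

lemma gens_in_W:
  assumes "\<forall>C\<in>S. abel C W1" "subspace W1"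
  shows "span (gens (\<Union>S) W1) \<subseteq> W1"
proof -
  have "gens (\<Union>S) W1 \<subseteq> W1"
  proof
    fix v assume "v \<in> gens (\<Union>S) W1"
    then obtain g a C where gaC: "C \<in> S" "g \<in> C" "a \<in> W1" "v = act g a - sc (th g) a"
      unfolding gens_def by blast
    have "abel C W1" using assms(1) gaC(1) by blast
    then have "act g ` W1 \<subseteq> W1" using gaC(2) unfolding abel_def by blast
    then have "act g a \<in> W1" using gaC(3) by blast
    with gaC(3,4) show "v \<in> W1" using assms(2) by (metis subspace_diff subspace_scale)
  qed
  then show ?thesis by (rule span_minimal[OF _ assms(2)])
qed

lemma list_exact:
  assumes W: "subspace W1"
  shows "(\<forall>C\<in>set Cs. abel C W1) \<Longrightarrow> (\<forall>i j. i < j \<and> j < length Cs \<longrightarrow> normz (Cs!j) (Cs!i)) \<Longrightarrow>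
    subspace Z \<Longrightarrow> (\<forall>C\<in>set Cs. \<forall>g\<in>C. act g ` Z \<subseteq> Z) \<Longrightarrow> x \<in> W1 \<Longrightarrow>
    y \<in> span (gens (\<Union>(set Cs)) UNIV) \<Longrightarrow> z \<in> Z \<Longrightarrow> x = y + z \<Longrightarrow>
    \<exists>k z'. k \<in> span (gens (\<Union>(set Cs)) W1) \<and> z' \<in> Z \<and> x = k + z'"
proof (induct Cs arbitrary: Z x y z)
  case Nil
  then show ?case by (intro exI[of _ 0] exI[of _ z]) (simp add: span_zero)
next
  case (Cons C Cs)
  have abC: "abel C W1" and abCs: "\<forall>D\<in>set Cs. abel D W1" using Cons.prems(1) by auto
  have nz: "\<forall>i j. i < j \<and> j < length Cs \<longrightarrow> normz (Cs!j) (Cs!i)"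
  proof (intro allI impI)
    fix i j assume "i < j \<and> j < length Cs"
    then show "normz (Cs!j) (Cs!i)" using Cons.prems(2)[rule_format, of "Suc i" "Suc j"] by simp
  qed
  have nzC: "normz D C" if DD: "D \<in> set Cs" for D
  proof -
    obtain j where "j < length Cs" "D = Cs ! j" using DD[unfolded in_set_conv_nth] by metis
    then show ?thesis using Cons.prems(2)[rule_format, of 0 "Suc j"] by simp
  qed
  have "y \<in> span (gens C UNIV \<union> gens (\<Union>(set Cs)) UNIV)" using Cons.prems(6) by (simp add: gens_Un)
  then have "\<exists>y1 y2. y = y1 + y2 \<and> y1 \<in> span (gens C UNIV) \<and> y2 \<in> span (gens (\<Union>(set Cs)) UNIV)"
    unfolding span_Un by (simp only: mem_Collect_eq)
  then obtain y1 y2 where y12: "y = y1 + y2" "y1 \<in> span (gens C UNIV)" "y2 \<in> span (gens (\<Union>(set Cs)) UNIV)"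
    by (elim exE conjE)
  define Z' where "Z' = {a + b | a b. a \<in> span (gens C UNIV) \<and> b \<in> Z}"
  have Z'sub: "subspace Z'" unfolding Z'_def using subspace_sums[OF subspace_span Cons.prems(3)] .
  have Z'st: "\<forall>D\<in>set Cs. \<forall>h\<in>D. act h ` Z' \<subseteq> Z'"
  proof (intro ballI subsetI)
    fix D h v assume D: "D \<in> set Cs" and h: "h \<in> D" and v: "v \<in> act h ` Z'"
    then obtain w where w: "w \<in> Z'" "v = act h w" by (elim imageE)
    then obtain a b where ab0: "a \<in> span (gens C UNIV)" "b \<in> Z" "w = a + b" unfolding Z'_def by (elim CollectE exE conjE)
    then have ab: "a \<in> span (gens C UNIV)" "b \<in> Z" "v = act h (a + b)" using w by simp_all
    have L: "Vector_Spaces.linear sc sc (act h)" using abCs D h by (auto simp: abel_def)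
    have "act h a \<in> act h ` span (gens C UNIV)" using ab(1) by (rule imageI)
    then have "act h a \<in> span (gens C UNIV)" using normz_span[OF nzC[OF D] h L] by (rule rev_subsetD)
    then have ha: "act h a \<in> span (gens C UNIV)" .
    have "\<forall>g\<in>D. act g ` Z \<subseteq> Z" using Cons.prems(4) D by simp
    then have hZ: "act h ` Z \<subseteq> Z" using h by (rule bspec)
    have "act h b \<in> act h ` Z" using ab(2) by (rule imageI)
    then have "act h b \<in> Z" using hZ by (rule rev_subsetD)
    moreover note \<open>act h a \<in> span (gens C UNIV)\<close>
    moreover have "v = act h a + act h b" using ab(3) lin_add[OF L] by simp
    ultimately show "v \<in> Z'" unfolding Z'_def by (intro CollectI exI conjI)
  qed
  have xeq: "x = y2 + (y1 + z)" using Cons.prems(8) y12(1) by (simp add: algebra_simps)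
  have zin: "y1 + z \<in> Z'" unfolding Z'_def using y12(2) Cons.prems(7) by (intro CollectI exI[of _ y1] exI[of _ z]) simp
  obtain k z'' where kz: "k \<in> span (gens (\<Union>(set Cs)) W1)" "z'' \<in> Z'" "x = k + z''"
    using Cons.hyps[OF abCs nz Z'sub Z'st Cons.prems(5) y12(3) zin xeq] by (elim exE conjE)
  obtain a b where ab: "a \<in> span (gens C UNIV)" "b \<in> Z" "z'' = a + b" using kz(2) unfolding Z'_def by (elim CollectE exE conjE)
  have kW: "k \<in> W1" using gens_in_W[OF abCs W] kz(1) by (rule subsetD)
  have xk: "x - k \<in> W1" by (rule subspace_diff[OF W Cons.prems(5) kW])
  have Cst: "\<forall>h\<in>C. act h ` Z \<subseteq> Z" using Cons.prems(4) by simp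
  have xk2: "x - k = a + b" using kz(3) ab(3) by simp
  have "\<exists>k' z'. k' \<in> span (gens C W1) \<and> z' \<in> Z \<and> x - k = k' + z'"
    by (rule abel_step[OF abC W Cons.prems(3) Cst xk xk2 ab(1) ab(2)])
  then obtain k' z' where k'z': "k' \<in> span (gens C W1)" "z' \<in> Z" "x - k = k' + z'"
    by blast
  have s1: "span (gens (\<Union>(set Cs)) W1) \<subseteq> span (gens (\<Union>(set (C # Cs))) W1)"
    by (rule span_mono) (simp add: gens_Un)
  have s2: "span (gens C W1) \<subseteq> span (gens (\<Union>(set (C # Cs))) W1)"
    by (rule span_mono) (simp add: gens_Un)
  have "k + k' \<in> span (gens (\<Union>(set (C # Cs))) W1)"
    using kz(1) k'z'(1) s1 s2 by (meson span_add subsetD)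
  moreover have "x = (k + k') + z'" using k'z'(3) by (simp add: algebra_simps)
  ultimately show ?case using k'z'(2) by (intro exI conjI)
qed

end



lemma offs_Suc: "offs ns (Suc s) = offs ns s + (if s < length ns then ns ! s else 0)"
  unfolding offs_def by (simp add: take_Suc_conv_app_nth)

lemma offs_mono: "s \<le> s' \<Longrightarrow> offs ns s \<le> offs ns s'"
proof (induct s' )
  case 0 then show ?case by simp
next
  case (Suc s') then show ?case
    by (cases "s = Suc s'") (auto simp: offs_Suc le_Suc_eq intro: le_trans)
qed

lemma offs_len: "offs ns (length ns) = sum_list ns"
  unfolding offs_def by simp

lemma block_end: "s < length ns \<Longrightarrow> offs ns s + ns ! s \<le> sum_list ns"
  using offs_mono[of "Suc s" "length ns" ns] by (simp add: offs_Suc offs_len)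

lemma in_block_lt: "in_block ns i s \<Longrightarrow> i < sum_list ns"
  unfolding in_block_def using block_end[of s ns] by simp

lemma in_block_unique_lt: "in_block ns i s \<Longrightarrow> in_block ns i s' \<Longrightarrow> s < s' \<Longrightarrow> False"
  unfolding in_block_def using offs_mono[of "Suc s" s' ns] by (simp add: offs_Suc)

lemma in_block_unique: "in_block ns i s \<Longrightarrow> in_block ns i s' \<Longrightarrow> s = s'"
  using in_block_unique_lt[of ns i s s'] in_block_unique_lt[of ns i s' s] by (meson linorder_neq_iff)

lemma offs_Cons0: "offs (a # ns) 0 = 0" unfolding offs_def by simp
lemma offs_ConsS: "offs (a # ns) (Suc s) = a + offs ns s" unfolding offs_def by simp

lemma in_block_exists: "i < sum_list ns \<Longrightarrow> \<exists>s. in_block ns i s"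
proof (induct ns arbitrary: i)
  case Nil then show ?case by simp
next
  case (Cons a ns)
  show ?case
  proof (cases "i < a")
    case True
    then have "in_block (a # ns) i 0" unfolding in_block_def by (simp add: offs_Cons0)
    then show ?thesis by blast
  next
    case False
    then have "i - a < sum_list ns" using Cons.prems by simp
    then obtain s where "in_block ns (i - a) s" using Cons.hyps by blast
    then have "in_block (a # ns) i (Suc s)" using False unfolding in_block_def by (simp add: offs_ConsS) linarith
    then show ?thesis by blast
  qed
qed

lemma block_diag_out:
  assumes "block_diag ns g" "sum_list ns \<le> a"
  shows "g a b = 0" "g b a = 0"
  using assms in_block_lt unfolding block_diag_def by (meson not_less)+

lemma mat_one_Uset: "mat_one (sum_list ns) \<in> Uset ns"
  unfolding Uset_def block_diag_def mat_one_def
  by (auto dest: in_block_exists split: if_splits)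

lemma Uset_det:
  assumes g: "g \<in> Uset ns"
  shows "mat_det (sum_list ns) g = 1"
proof -
  let ?n = "sum_list ns"
  have low: "\<And>i j. j < i \<Longrightarrow> g i j = 0" and dg: "\<And>i. i < ?n \<Longrightarrow> g i i = 1" using g unfolding Uset_def by auto
  have z: "(\<Prod>i<?n. g i (q i)) = 0" if q: "q permutes {..<?n}" "q \<noteq> id" for q
  proof -
    have "\<not> (\<forall>i\<in>{..<?n}. q i \<ge> i)" using permutes_natset_ge[OF q(1)] q(2) by blast
    then obtain i where "i < ?n" "q i < i" by (auto simp: not_le)
    then show ?thesis using low by (intro prod_zero) auto
  qed
  have "mat_det ?n g = (\<Sum>q\<in>{id}. of_int (sign q) * (\<Prod>i<?n. g i (q i)))"
    unfolding mat_det_def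
    by (rule sum.mono_neutral_right) (auto simp: permutes_id z finite_permutations)
  also have "\<dots> = 1" using dg by simp
  finally show ?thesis .
qed

lemma Uset_Mprime: "Uset ns \<subseteq> Mprime ns"
  using Uset_det unfolding Mprime_def Uset_def by auto

definition colmat :: "nat \<Rightarrow> nat \<Rightarrow> (nat \<Rightarrow> 'f::field) \<Rightarrow> 'f mat" where
  "colmat n J w = (\<lambda>a b. mat_one n a b + (if b = J \<and> a \<noteq> J then w a else 0))"

definition okw :: "nat list \<Rightarrow> nat \<Rightarrow> (nat \<Rightarrow> 'f::field) \<Rightarrow> bool" where
  "okw ns J w \<longleftrightarrow> (\<forall>a. a \<noteq> J \<and> w a \<noteq> 0 \<longrightarrow> a < J \<and> (\<exists>s. in_block ns a s \<and> in_block ns J s))"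

definition colgroup :: "nat list \<Rightarrow> nat \<Rightarrow> 'f::field mat set" where
  "colgroup ns J = {g \<in> Uset ns. \<forall>a b. a \<noteq> b \<and> g a b \<noteq> 0 \<longrightarrow> b = J}"

lemma okw_out: "okw ns J w \<Longrightarrow> sum_list ns \<le> a \<Longrightarrow> a \<noteq> J \<Longrightarrow> w a = 0"
  unfolding okw_def using in_block_lt by (meson not_less)

lemma okw_lt: "okw ns J w \<Longrightarrow> J < a \<Longrightarrow> w a = 0"
  unfolding okw_def by force

lemma row_sum:
  assumes "J < n" "a < n"
  shows "(\<Sum>l<n. colmat n J w a l * X l) = X a + (if a \<noteq> J then w a * X J else 0)"
proof -
  have "(\<Sum>l<n. colmat n J w a l * X l) = (\<Sum>l<n. (if l = a then X l else 0) + (if l = J then (if a \<noteq> J then w a * X l else 0) else 0))"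
    by (rule sum.cong) (auto simp: colmat_def mat_one_def assms distrib_right)
  also have "\<dots> = X a + (if a \<noteq> J then w a * X J else 0)"
    using assms by (simp add: sum.distrib)
  finally show ?thesis .
qed

lemma mul_colmat:
  assumes "J < n"
  shows "mat_mul n (colmat n J w) B = (\<lambda>a b. if a < n \<and> b < n then B a b + (if a \<noteq> J then w a * B J b else 0) else 0)"
  unfolding mat_mul_def by (auto simp: fun_eq_iff row_sum[OF assms])

lemma colmat_zero: "colmat n J (\<lambda>_. 0) = mat_one n"
  by (simp add: colmat_def fun_eq_iff)

lemma colmat_prod:
  assumes J: "J < sum_list ns" and w: "okw ns J w" and w': "okw ns J w'"
  shows "mat_mul (sum_list ns) (colmat (sum_list ns) J w) (colmat (sum_list ns) J w')
       = colmat (sum_list ns) J (\<lambda>a. w a + w' a)"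
  unfolding mul_colmat[OF J]
  using okw_out[OF w] okw_out[OF w'] J
  by (auto simp: fun_eq_iff colmat_def mat_one_def algebra_simps not_less)

lemma colmat_conj:
  assumes jJ: "j < J" and J: "J < sum_list ns" and v: "okw ns j v" and w: "okw ns J w"
  shows "mat_mul (sum_list ns) (colmat (sum_list ns) j v) (colmat (sum_list ns) J w)
       = mat_mul (sum_list ns) (colmat (sum_list ns) J (\<lambda>a. w a + (if a \<noteq> j then v a * w j else 0))) (colmat (sum_list ns) j v)"
proof -
  have j: "j < sum_list ns" using jJ J by simp
  have vJ: "v J = 0" using okw_lt[OF v jJ] .
  show ?thesis
    unfolding mul_colmat[OF J] mul_colmat[OF j]
    using vJ jJ
    by (auto simp: fun_eq_iff colmat_def mat_one_def algebra_simps)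
qed

lemma okw_conj:
  assumes jJ: "j < J" and v: "okw ns j v" and w: "okw ns J w"
  shows "okw ns J (\<lambda>a. w a + (if a \<noteq> j then v a * w j else 0))"
  unfolding okw_def
proof (intro allI impI)
  fix a assume a: "a \<noteq> J \<and> w a + (if a \<noteq> j then v a * w j else 0) \<noteq> 0"
  show "a < J \<and> (\<exists>s. in_block ns a s \<and> in_block ns J s)"
  proof (cases "w a \<noteq> 0")
    case True then show ?thesis using w a unfolding okw_def by blast
  next
    case False
    then have "a \<noteq> j" "v a \<noteq> 0" "w j \<noteq> 0" using a by (auto split: if_splits)
    then obtain s s' where "a < j" "in_block ns a s" "in_block ns j s" "in_block ns j s'" "in_block ns J s'"
      using v w jJ unfolding okw_def by (metis less_irrefl)
    then show ?thesis using in_block_unique jJ by (metis order.strict_trans)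
  qed
qed

lemma okw_add: "okw ns J w \<Longrightarrow> okw ns J w' \<Longrightarrow> okw ns J (\<lambda>a. w a + w' a)"
  unfolding okw_def by (metis add.right_neutral)

lemma okw_scale: "okw ns J w \<Longrightarrow> okw ns J (\<lambda>a. c * w a)"
  unfolding okw_def by auto

lemma colmat_in:
  assumes J: "J < sum_list ns" and w: "okw ns J w"
  shows "colmat (sum_list ns) J w \<in> colgroup ns J"
proof -
  let ?g = "colmat (sum_list ns) J w"
  have bd: "block_diag ns ?g"
    unfolding block_diag_def
  proof (intro allI impI)
    fix a b assume nz: "?g a b \<noteq> 0"
    show "\<exists>s. in_block ns a s \<and> in_block ns b s"
    proof (cases "b = J \<and> a \<noteq> J \<and> w a \<noteq> 0")
      case True then show ?thesis using w unfolding okw_def by blast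
    next
      case False
      then have "a = b" "a < sum_list ns" using nz by (auto simp: colmat_def mat_one_def split: if_splits)
      then show ?thesis using in_block_exists by blast
    qed
  qed
  moreover have "\<forall>i<sum_list ns. ?g i i = 1" by (simp add: colmat_def mat_one_def)
  moreover have "\<forall>i j. j < i \<longrightarrow> ?g i j = 0"
    using okw_lt[OF w] by (auto simp: colmat_def mat_one_def)
  moreover have "\<forall>a b. a \<noteq> b \<and> ?g a b \<noteq> 0 \<longrightarrow> b = J"
    by (auto simp: colmat_def mat_one_def split: if_splits)
  ultimately show ?thesis unfolding colgroup_def Uset_def by blast
qed

lemma colgroup_colmat:
  assumes g: "g \<in> colgroup ns J"
  shows "g = colmat (sum_list ns) J (\<lambda>a. g a J)" "okw ns J (\<lambda>a. g a J)"
proof -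
  have bd: "block_diag ns g" and dg: "\<forall>i<sum_list ns. g i i = 1" and lo: "\<forall>i j. j < i \<longrightarrow> g i j = 0"
    and col: "\<forall>a b. a \<noteq> b \<and> g a b \<noteq> 0 \<longrightarrow> b = J"
    using g unfolding colgroup_def Uset_def by auto
  show "g = colmat (sum_list ns) J (\<lambda>a. g a J)"
  proof (intro ext)
    fix a b
    show "g a b = colmat (sum_list ns) J (\<lambda>a. g a J) a b"
    proof (cases "a = b")
      case True
      then show ?thesis using dg block_diag_out(1)[OF bd, of a b]
        by (cases "a < sum_list ns") (auto simp: colmat_def mat_one_def)
    next
      case False
      then show ?thesis using col by (auto simp: colmat_def mat_one_def)
    qed
  qed
  show "okw ns J (\<lambda>a. g a J)"
    unfolding okw_def
  proof (intro allI impI)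
    fix a assume a: "a \<noteq> J \<and> g a J \<noteq> 0"
    then have "a < J" using lo by (meson linorder_neq_iff)
    moreover obtain s where "in_block ns a s \<and> in_block ns J s" using bd a unfolding block_diag_def by blast
    ultimately show "a < J \<and> (\<exists>s. in_block ns a s \<and> in_block ns J s)" by blast
  qed
qed

lemma colgroup_Uset: "colgroup ns J \<subseteq> Uset ns"
  unfolding colgroup_def by blast

lemma colmat_diff:
  "i < n \<Longrightarrow> j < n \<Longrightarrow> colmat n J w i j - mat_one n i j = (if j = J \<and> i \<noteq> J then w i else 0)"
  by (simp add: colmat_def)

lemma abs_facts:
  fixes absv :: "'f::field \<Rightarrow> real"
  assumes mulabs: "\<forall>x y. absv (x*y) = absv x * absv y" and abs0: "\<forall>x. absv x = 0 \<longleftrightarrow> x = 0"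
  shows "absv 1 = 1" "absv (x ^ N) = absv x ^ N"
proof -
  have "absv 1 = absv 1 * absv 1" using mulabs by (metis mult_1)
  moreover have "absv 1 \<noteq> 0" using abs0 by simp
  ultimately show one: "absv 1 = 1" by (metis mult_cancel_left1)
  show "absv (x ^ N) = absv x ^ N"
    by (induct N) (simp_all add: one mulabs)
qed

lemma pow_colmat:
  fixes tau :: "'f::field mat \<Rightarrow> 'v::ab_group_add \<Rightarrow> 'v" and \<theta> :: "'f mat \<Rightarrow> 'k::field"
  assumes rep: "rep_M ns sv tau"
    and thmul: "\<forall>g \<in> Uset ns. \<forall>h \<in> Uset ns. \<theta> (mat_mul (sum_list ns) g h) = \<theta> g * \<theta> h"
    and th1: "\<theta> (mat_one (sum_list ns)) = 1"
    and J: "J < sum_list ns" and w: "okw ns J w"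
  shows "tau (colmat (sum_list ns) J w) ^^ r = tau (colmat (sum_list ns) J (\<lambda>i. of_nat r * w i))"
    "\<theta> (colmat (sum_list ns) J w) ^ r = \<theta> (colmat (sum_list ns) J (\<lambda>i. of_nat r * w i))"
proof -
  let ?n = "sum_list ns"
  have one: "tau (mat_one ?n) = id" and mul: "\<forall>g \<in> Mprime ns. \<forall>h \<in> Mprime ns. tau (mat_mul ?n g h) = tau g \<circ> tau h"
    using rep unfolding rep_M_def by auto
  have inU: "colmat ?n J (\<lambda>i. c * w i) \<in> Uset ns" for c
    using colmat_in[OF J okw_scale[OF w]] colgroup_Uset by blast
  have inU1: "colmat ?n J w \<in> Uset ns" using colmat_in[OF J w] colgroup_Uset by blast
  have prod: "mat_mul ?n (colmat ?n J w) (colmat ?n J (\<lambda>i. of_nat r * w i)) = colmat ?n J (\<lambda>i. of_nat (Suc r) * w i)" for r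
    using colmat_prod[OF J w okw_scale[OF w]] by (simp add: algebra_simps)
  have z: "colmat ?n J (\<lambda>i. of_nat 0 * w i) = mat_one ?n" using colmat_zero[of ?n J] by simp
  show "tau (colmat ?n J w) ^^ r = tau (colmat ?n J (\<lambda>i. of_nat r * w i))"
  proof (induct r)
    case 0 then show ?case using z one by simp
  next
    case (Suc r)
    have "tau (colmat ?n J w) ^^ Suc r = tau (colmat ?n J w) \<circ> tau (colmat ?n J (\<lambda>i. of_nat r * w i))"
      using Suc by simp
    also have "\<dots> = tau (colmat ?n J (\<lambda>i. of_nat (Suc r) * w i))"
      using mul inU inU1 Uset_Mprime prod[of r] by (metis subsetD)
    finally show ?case .
  qed
  show "\<theta> (colmat ?n J w) ^ r = \<theta> (colmat ?n J (\<lambda>i. of_nat r * w i))"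
  proof (induct r)
    case 0 then show ?case using z th1 by simp
  next
    case (Suc r)
    have "\<theta> (colmat ?n J w) ^ Suc r = \<theta> (colmat ?n J w) * \<theta> (colmat ?n J (\<lambda>i. of_nat r * w i))"
      using Suc by simp
    also have "\<dots> = \<theta> (colmat ?n J (\<lambda>i. of_nat (Suc r) * w i))"
      using thmul inU inU1 prod[of r] by metis
    finally show ?case .
  qed
qed

lemma theta_one:
  fixes \<theta> :: "'f::field mat \<Rightarrow> 'k::field"
  assumes nz: "\<forall>g \<in> Uset ns. \<theta> g \<noteq> 0"
    and thmul: "\<forall>g \<in> Uset ns. \<forall>h \<in> Uset ns. \<theta> (mat_mul (sum_list ns) g h) = \<theta> g * \<theta> h"
  shows "\<theta> (mat_one (sum_list ns)) = 1"
proof -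
  let ?I = "mat_one (sum_list ns) :: 'f mat"
  have "mat_mul (sum_list ns) ?I ?I = ?I"
    using colmat_prod[of 0 ns "\<lambda>_. 0" "\<lambda>_. 0"] colmat_zero
    by (auto simp: fun_eq_iff mat_mul_def mat_one_def if_distrib[where f="\<lambda>x. x * _"] cong: if_cong)
  then have "\<theta> ?I = \<theta> ?I * \<theta> ?I" using thmul mat_one_Uset by metis
  moreover have "\<theta> ?I \<noteq> 0" using nz mat_one_Uset by blast
  ultimately show ?thesis by (metis mult_cancel_left1)
qed

lemma abel_col:
  fixes absv :: "'f::field \<Rightarrow> real" and sv :: "'k::field \<Rightarrow> 'v::ab_group_add \<Rightarrow> 'v"
    and tau :: "'f mat \<Rightarrow> 'v \<Rightarrow> 'v" and \<theta> :: "'f mat \<Rightarrow> 'k"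
  assumes rep: "rep_M ns sv tau"
    and sm: "\<forall>v. \<exists>\<epsilon>>0. \<forall>g \<in> Mprime ns.
        (\<forall>i<sum_list ns. \<forall>j<sum_list ns. absv (g i j - mat_one (sum_list ns) i j) < \<epsilon>) \<longrightarrow> tau g v = v"
    and nz: "\<forall>g \<in> Uset ns. \<theta> g \<noteq> 0"
    and thmul: "\<forall>g \<in> Uset ns. \<forall>h \<in> Uset ns. \<theta> (mat_mul (sum_list ns) g h) = \<theta> g * \<theta> h"
    and thsm: "\<exists>\<epsilon>>0. \<forall>g \<in> Uset ns. (\<forall>i<sum_list ns. \<forall>j<sum_list ns. absv (g i j - mat_one (sum_list ns) i j) < \<epsilon>) \<longrightarrow> \<theta> g = 1"
    and mulabs: "\<forall>x y. absv (x*y) = absv x * absv y" and abs0: "\<forall>x. absv x = 0 \<longleftrightarrow> x = 0"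
    and absnn: "\<forall>x. 0 \<le> absv x"
    and pl: "absv (of_nat p) < 1" and pk: "of_nat p \<noteq> (0::'k)"
    and W1st: "\<forall>g\<in>Mprime ns. tau g ` W1 \<subseteq> W1"
    and J: "J < sum_list ns"
  shows "exloc.abel sv tau \<theta> (colgroup ns J) W1"
proof -
  let ?n = "sum_list ns"
  have vs: "vector_space sv" using rep unfolding rep_M_def by simp
  interpret E: exloc sv tau \<theta> using vs unfolding exloc_def .
  have mul: "\<forall>g \<in> Mprime ns. \<forall>h \<in> Mprime ns. tau (mat_mul ?n g h) = tau g \<circ> tau h"
    and lin: "\<forall>g \<in> Mprime ns. Vector_Spaces.linear sv sv (tau g)"
    using rep unfolding rep_M_def by auto
  have th1: "\<theta> (mat_one ?n) = 1" using theta_one[OF nz thmul] .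
  have inM: "g \<in> Mprime ns" if "g \<in> colgroup ns J" for g :: "'f mat"
    using that colgroup_Uset Uset_Mprime by blast
  have inUs: "g \<in> Uset ns" if "g \<in> colgroup ns J" for g :: "'f mat"
    using that colgroup_Uset by blast
  have part1: "\<forall>g\<in>colgroup ns J. Vector_Spaces.linear sv sv (tau g) \<and> \<theta> g \<noteq> 0 \<and> tau g ` W1 \<subseteq> W1"
    using inM inUs lin nz W1st by blast
  have prodg: "mat_mul ?n g h \<in> colgroup ns J \<and> mat_mul ?n g h = mat_mul ?n h g"
    if g: "g \<in> colgroup ns J" and h: "h \<in> colgroup ns J" for g h :: "'f mat"
  proof -
    have eg: "g = colmat ?n J (\<lambda>a. g a J)" and wg: "okw ns J (\<lambda>a. g a J)" using colgroup_colmat[OF g] by auto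
    have eh: "h = colmat ?n J (\<lambda>a. h a J)" and wh: "okw ns J (\<lambda>a. h a J)" using colgroup_colmat[OF h] by auto
    have "mat_mul ?n g h = colmat ?n J (\<lambda>a. g a J + h a J)"
      using colmat_prod[OF J wg wh] eg eh by metis
    moreover have "mat_mul ?n h g = colmat ?n J (\<lambda>a. h a J + g a J)"
      using colmat_prod[OF J wh wg] eg eh by metis
    moreover have "colmat ?n J (\<lambda>a. g a J + h a J) \<in> colgroup ns J"
      by (rule colmat_in[OF J okw_add[OF wg wh]])
    ultimately show ?thesis by (simp add: add.commute)
  qed
  have part2: "\<forall>g\<in>colgroup ns J. \<forall>h\<in>colgroup ns J. \<exists>k\<in>colgroup ns J. tau g \<circ> tau h = tau k \<and> \<theta> k = \<theta> g * \<theta> h"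
  proof (intro ballI)
    fix g h :: "'f mat" assume g: "g \<in> colgroup ns J" and h: "h \<in> colgroup ns J"
    have "tau g \<circ> tau h = tau (mat_mul ?n g h)" using mul inM[OF g] inM[OF h] by metis
    moreover have "\<theta> (mat_mul ?n g h) = \<theta> g * \<theta> h" using thmul inUs[OF g] inUs[OF h] by metis
    ultimately show "\<exists>k\<in>colgroup ns J. tau g \<circ> tau h = tau k \<and> \<theta> k = \<theta> g * \<theta> h"
      using prodg[OF g h] by metis
  qed
  have part3: "\<forall>g\<in>colgroup ns J. \<forall>h\<in>colgroup ns J. tau g \<circ> tau h = tau h \<circ> tau g"
  proof (intro ballI)
    fix g h :: "'f mat" assume g: "g \<in> colgroup ns J" and h: "h \<in> colgroup ns J"
    have "tau g \<circ> tau h = tau (mat_mul ?n g h)" using mul inM[OF g] inM[OF h] by metis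
    also have "\<dots> = tau (mat_mul ?n h g)" using prodg[OF g h] by metis
    also have "\<dots> = tau h \<circ> tau g" using mul inM[OF g] inM[OF h] by metis
    finally show "tau g \<circ> tau h = tau h \<circ> tau g" .
  qed
  have part4: "\<forall>g\<in>colgroup ns J. \<forall>a. \<exists>r. of_nat r \<noteq> (0::'k) \<and> (tau g ^^ r) a = sv (\<theta> g ^ r) a"
  proof (intro ballI allI)
    fix g :: "'f mat" and a assume g: "g \<in> colgroup ns J"
    define w where "w = (\<lambda>a. g a J)"
    have eg: "g = colmat ?n J w" and wg: "okw ns J w" using colgroup_colmat[OF g] unfolding w_def by auto
    obtain e1 where e1: "e1 > 0" "\<forall>g \<in> Mprime ns. (\<forall>i<?n. \<forall>j<?n. absv (g i j - mat_one ?n i j) < e1) \<longrightarrow> tau g a = a"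
      using sm by blast
    obtain e2 where e2: "e2 > 0" "\<forall>g \<in> Uset ns. (\<forall>i<?n. \<forall>j<?n. absv (g i j - mat_one ?n i j) < e2) \<longrightarrow> \<theta> g = 1"
      using thsm by blast
    define e where "e = min e1 e2"
    define M where "M = (\<Sum>i<?n. absv (w i)) + 1"
    have Mpos: "M > 0" unfolding M_def using absnn by (simp add: add_nonneg_pos sum_nonneg)
    have epos: "e / M > 0" unfolding e_def using e1 e2 Mpos by simp
    obtain N where N: "absv (of_nat p) ^ N < e / M" using real_arch_pow_inv[OF epos pl] by blast
    define r where "r = p ^ N"
    have absr: "absv (of_nat r :: 'f) = absv (of_nat p) ^ N"
      unfolding r_def using abs_facts[OF mulabs abs0] by (simp add: of_nat_power)
    let ?h = "colmat ?n J (\<lambda>i. of_nat r * w i)"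
    have hc: "?h \<in> colgroup ns J" by (rule colmat_in[OF J okw_scale[OF wg]])
    have close: "\<forall>i<?n. \<forall>j<?n. absv (?h i j - mat_one ?n i j) < e"
    proof (intro allI impI)
      fix i j assume i: "i < ?n" and j: "j < ?n"
      have "absv (of_nat r * w i) < e"
      proof -
        have wi: "absv (w i) \<le> M" unfolding M_def
          using member_le_sum[of i "{..<?n}" "\<lambda>i. absv (w i)"] i absnn by simp
        have "absv (of_nat r * w i) = absv (of_nat p) ^ N * absv (w i)" using mulabs absr by simp
        also have "\<dots> \<le> absv (of_nat p) ^ N * M" using wi absnn by (simp add: mult_left_mono)
        also have "\<dots> < e / M * M" using N Mpos by (rule mult_strict_right_mono)
        also have "\<dots> = e" using Mpos by simp
        finally show ?thesis .
      qed
      moreover have "absv 0 < e"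
      proof -
        have "absv 0 = 0" using abs0 by blast
        then show ?thesis using e1(1) e2(1) unfolding e_def by simp
      qed
      ultimately show "absv (?h i j - mat_one ?n i j) < e" by (simp add: colmat_diff[OF i j])
    qed
    have "tau ?h a = a" using e1(2) inM[OF hc] close unfolding e_def by force
    moreover have "\<theta> ?h = 1" using e2(2) inUs[OF hc] close unfolding e_def by force
    moreover have "(tau g ^^ r) a = tau ?h a" using pow_colmat(1)[OF rep thmul th1 J wg] eg by simp
    moreover have "\<theta> g ^ r = \<theta> ?h" using pow_colmat(2)[OF rep thmul th1 J wg] eg by simp
    moreover have "of_nat r \<noteq> (0::'k)" unfolding r_def using pk by (simp add: of_nat_power)
    ultimately show "\<exists>r. of_nat r \<noteq> (0::'k) \<and> (tau g ^^ r) a = sv (\<theta> g ^ r) a" by auto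
  qed
  show ?thesis unfolding E.abel_def using part1 part2 part3 part4 by blast
qed

lemma normz_col:
  fixes sv :: "'k::field \<Rightarrow> 'v::ab_group_add \<Rightarrow> 'v"
    and tau :: "'f::field mat \<Rightarrow> 'v \<Rightarrow> 'v" and \<theta> :: "'f mat \<Rightarrow> 'k"
  assumes rep: "rep_M ns sv tau"
    and nz: "\<forall>g \<in> Uset ns. \<theta> g \<noteq> 0"
    and thmul: "\<forall>g \<in> Uset ns. \<forall>h \<in> Uset ns. \<theta> (mat_mul (sum_list ns) g h) = \<theta> g * \<theta> h"
    and jJ: "j < J" and J: "J < sum_list ns"
  shows "exloc.normz tau \<theta> (colgroup ns j) (colgroup ns J)"
proof -
  let ?n = "sum_list ns"
  have vs: "vector_space sv" using rep unfolding rep_M_def by simp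
  interpret E: exloc sv tau \<theta> using vs unfolding exloc_def .
  have mul: "\<forall>g \<in> Mprime ns. \<forall>h \<in> Mprime ns. tau (mat_mul ?n g h) = tau g \<circ> tau h"
    using rep unfolding rep_M_def by auto
  have j: "j < ?n" using jJ J by simp
  show ?thesis unfolding E.normz_def
  proof (intro ballI)
    fix h g :: "'f mat" assume h: "h \<in> colgroup ns j" and g: "g \<in> colgroup ns J"
    define v where "v = (\<lambda>a. h a j)"
    define w where "w = (\<lambda>a. g a J)"
    have eh: "h = colmat ?n j v" and wh: "okw ns j v" using colgroup_colmat[OF h] unfolding v_def by auto
    have eg: "g = colmat ?n J w" and wg: "okw ns J w" using colgroup_colmat[OF g] unfolding w_def by auto
    define g' where "g' = colmat ?n J (\<lambda>a. w a + (if a \<noteq> j then v a * w j else 0))"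
    have g'c: "g' \<in> colgroup ns J" unfolding g'_def by (rule colmat_in[OF J okw_conj[OF jJ wh wg]])
    have eq: "mat_mul ?n h g = mat_mul ?n g' h" unfolding g'_def eh eg by (rule colmat_conj[OF jJ J wh wg])
    have hU: "h \<in> Uset ns" "g \<in> Uset ns" "g' \<in> Uset ns" using h g g'c colgroup_Uset by blast+
    then have hM: "h \<in> Mprime ns" "g \<in> Mprime ns" "g' \<in> Mprime ns" using Uset_Mprime by blast+
    have "tau h \<circ> tau g = tau (mat_mul ?n h g)" using mul hM(1,2) by simp
    also have "\<dots> = tau (mat_mul ?n g' h)" using eq by simp
    also have "\<dots> = tau g' \<circ> tau h" using mul hM(1,3) by simp
    finally have "tau h \<circ> tau g = tau g' \<circ> tau h" .
    moreover have "\<theta> g' = \<theta> g"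
    proof -
      have "\<theta> h * \<theta> g = \<theta> (mat_mul ?n h g)" using thmul hU(1,2) by simp
      also have "\<dots> = \<theta> (mat_mul ?n g' h)" using eq by simp
      also have "\<dots> = \<theta> g' * \<theta> h" using thmul hU(1,3) by simp
      finally have "\<theta> h * \<theta> g = \<theta> g' * \<theta> h" .
      then show ?thesis using nz hU(1) by (simp add: mult.commute)
    qed
    ultimately show "\<exists>g'\<in>colgroup ns J. tau h \<circ> tau g = tau g' \<circ> tau h \<and> \<theta> g' = \<theta> g"
      using g'c by blast
  qed
qed

lemma colgroups_nth:
  "i < n \<Longrightarrow> map (colgroup ns) (rev [0..<n]) ! i = colgroup ns (n - Suc i)"
  by (simp add: rev_nth)

lemma Nset_sub:
  assumes "s < length ns" "2 \<le> j" "j \<le> ns ! s"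
  shows "Nset ns s j \<subseteq> colgroup ns (offs ns s + j - 1)" "offs ns s + j - 1 < sum_list ns"
proof -
  show "Nset ns s j \<subseteq> colgroup ns (offs ns s + j - 1)"
    unfolding Nset_def colgroup_def by blast
  show "offs ns s + j - 1 < sum_list ns" using block_end[OF assms(1)] assms(2,3) by simp
qed

lemma colgroup_sub:
  assumes g: "g \<in> colgroup ns J" and J: "J < sum_list ns"
  shows "g = mat_one (sum_list ns) \<or> (\<exists>s<length ns. \<exists>j. 2 \<le> j \<and> j \<le> ns ! s \<and> g \<in> Nset ns s j)"
proof (cases "\<exists>a. a \<noteq> J \<and> g a J \<noteq> 0")
  case False
  have "g = colmat (sum_list ns) J (\<lambda>a. g a J)" by (rule colgroup_colmat(1)[OF g])
  also have "\<dots> = colmat (sum_list ns) J (\<lambda>_. 0)"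
    using False unfolding colmat_def by (auto simp: fun_eq_iff)
  also have "\<dots> = mat_one (sum_list ns)" by (rule colmat_zero)
  finally show ?thesis by simp
next
  case True
  then obtain a where a: "a \<noteq> J" "g a J \<noteq> 0" by blast
  have w: "okw ns J (\<lambda>a. g a J)" using colgroup_colmat(2)[OF g] .
  then obtain s where s: "a < J" "in_block ns a s" "in_block ns J s" using a unfolding okw_def by blast
  define j where "j = J + 1 - offs ns s"
  have sl: "s < length ns" and o1: "offs ns s \<le> a" and o2: "J < offs ns s + ns ! s"
    using s unfolding in_block_def by auto
  have j2: "2 \<le> j" and jle: "j \<le> ns ! s" using o1 o2 s(1) unfolding j_def by auto
  have Jeq: "offs ns s + j - 1 = J" using o1 s(1) unfolding j_def by auto
  have gU: "g \<in> Uset ns" and col: "\<forall>a b. a \<noteq> b \<and> g a b \<noteq> 0 \<longrightarrow> b = J"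
    using g unfolding colgroup_def by auto
  have "g \<in> Nset ns s j"
    unfolding Nset_def
  proof (rule CollectI, rule conjI[OF gU], intro allI impI)
    fix a' b assume ab: "a' \<noteq> b \<and> g a' b \<noteq> 0"
    then have bJ: "b = J" using col by blast
    then obtain s' where "a' < J" "in_block ns a' s'" "in_block ns J s'"
      using w ab unfolding okw_def by blast
    then have "s' = s" using s(3) in_block_unique by blast
    then have "offs ns s \<le> a'" using \<open>in_block ns a' s'\<close> unfolding in_block_def by simp
    then show "b = offs ns s + j - 1 \<and> offs ns s \<le> a'" using bJ Jeq by simp
  qed
  then show ?thesis using sl j2 jle by blast
qed

context exloc
begin

lemma span_span_Un: "span (span A \<union> B) = span (A \<union> B)"
proof
  have "span A \<union> B \<subseteq> span (A \<union> B)"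
    using span_mono[of A "A \<union> B"] span_superset[of "A \<union> B"] by blast
  then show "span (span A \<union> B) \<subseteq> span (A \<union> B)" by (rule span_minimal) simp
  show "span (A \<union> B) \<subseteq> span (span A \<union> B)"
    by (rule span_mono) (use span_superset[of A] in blast)
qed

lemma foldl_span:
  "foldl (\<lambda>K N. span (K \<union> {act g a - sc (th g) a | g a. g \<in> N})) (span A) Ns = span (A \<union> gens (\<Union>(set Ns)) UNIV)"
proof (induct Ns arbitrary: A)
  case Nil then show ?case by (simp add: gens_def)
next
  case (Cons N Ns)
  have "foldl (\<lambda>K N. span (K \<union> {act g a - sc (th g) a | g a. g \<in> N})) (span A) (N # Ns)
     = span ((span A \<union> {act g a - sc (th g) a | g a. g \<in> N}) \<union> gens (\<Union>(set Ns)) UNIV)"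
    using Cons by simp
  also have "\<dots> = span (span A \<union> ({act g a - sc (th g) a | g a. g \<in> N} \<union> gens (\<Union>(set Ns)) UNIV))"
    by (simp add: Un_assoc)
  also have "\<dots> = span (A \<union> ({act g a - sc (th g) a | g a. g \<in> N} \<union> gens (\<Union>(set Ns)) UNIV))"
    by (rule span_span_Un)
  also have "{act g a - sc (th g) a | g a. g \<in> N} \<union> gens (\<Union>(set Ns)) UNIV = gens (\<Union>(set (N # Ns))) UNIV"
    unfolding gens_def by auto
  finally show ?case .
qed

end

lemma dk:
  fixes sc :: "'k::field \<Rightarrow> 'v::ab_group_add \<Rightarrow> 'v" and act :: "'f::field mat \<Rightarrow> 'v \<Rightarrow> 'v"
  assumes "vector_space sc"
  shows "deriv_kernel sc act th Ns = module.span sc (exloc.gens sc act th (\<Union>(set Ns)) UNIV)"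
proof -
  interpret E: exloc sc act th using assms unfolding exloc_def .
  have "{0} = E.span {}" by simp
  then show ?thesis unfolding deriv_kernel_def using E.foldl_span[of "{}" Ns] by simp
qed

lemma phi_span:
  fixes sv :: "'k::field \<Rightarrow> 'v::ab_group_add \<Rightarrow> 'v" and sw :: "'k \<Rightarrow> 'w::ab_group_add \<Rightarrow> 'w"
  assumes vsv: "vector_space sv" and vsw: "vector_space sw" and W: "module.subspace sv W1"
    and add: "\<forall>x\<in>W1. \<forall>y\<in>W1. \<phi> (x + y) = \<phi> x + \<phi> y"
    and scl: "\<forall>c. \<forall>x\<in>W1. \<phi> (sv c x) = sw c (\<phi> x)"
    and X: "X \<subseteq> W1" and img: "\<phi> ` X \<subseteq> module.span sw Y"
    and x: "x \<in> module.span sv X"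
  shows "\<phi> x \<in> module.span sw Y"
proof -
  interpret V: vector_space sv by (rule vsv)
  interpret Ww: vector_space sw by (rule vsw)
  have "x \<in> W1 \<and> \<phi> x \<in> Ww.span Y" using x
  proof (induct rule: V.span_induct_alt)
    case base
    have z: "0 \<in> W1" using V.subspace_0[OF W] .
    then have "\<phi> (0 + 0) = \<phi> 0 + \<phi> 0" using add by blast
    then have "\<phi> 0 = 0" by simp
    then show ?case using z Ww.span_zero by simp
  next
    case (step c x y)
    have xW: "x \<in> W1" using step X by blast
    have cx: "sv c x \<in> W1" using V.subspace_scale[OF W xW] .
    have "sv c x + y \<in> W1" using V.subspace_add[OF W cx] step by blast
    moreover have "\<phi> (sv c x + y) = sw c (\<phi> x) + \<phi> y" using add scl cx xW step by simp
    moreover have "\<phi> x \<in> Ww.span Y" using img step by blast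
    ultimately show ?case using step by (simp add: Ww.span_add Ww.span_scale)
  qed
  then show ?thesis by simp
qed

lemma Sd_iff:
  "g \<in> \<Union>(set (deriv_groups ns)) \<longleftrightarrow> (\<exists>s<length ns. \<exists>j. 2 \<le> j \<and> j \<le> ns ! s \<and> g \<in> Nset ns s j)"
proof -
  have "g \<in> \<Union>(set (deriv_groups ns)) \<longleftrightarrow>
     (\<exists>y\<in>{0..<length ns}. 2 \<le> ns ! y \<and> (\<exists>x. (x = ns ! y \<or> 2 \<le> x \<and> x < ns ! y) \<and> g \<in> Nset ns y x))"
    unfolding deriv_groups_def by simp
  also have "\<dots> \<longleftrightarrow> (\<exists>s<length ns. \<exists>j. 2 \<le> j \<and> j \<le> ns ! s \<and> g \<in> Nset ns s j)"
  proof
    assume "\<exists>y\<in>{0..<length ns}. 2 \<le> ns ! y \<and> (\<exists>x. (x = ns ! y \<or> 2 \<le> x \<and> x < ns ! y) \<and> g \<in> Nset ns y x)"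
    then obtain y where y: "y \<in> {0..<length ns}" and y2: "2 \<le> ns ! y \<and> (\<exists>x. (x = ns ! y \<or> 2 \<le> x \<and> x < ns ! y) \<and> g \<in> Nset ns y x)"
      by (rule bexE)
    then obtain x where x: "(x = ns ! y \<or> 2 \<le> x \<and> x < ns ! y) \<and> g \<in> Nset ns y x" by blast
    have "y < length ns \<and> 2 \<le> x \<and> x \<le> ns ! y \<and> g \<in> Nset ns y x" using x y y2 by auto
    then show "\<exists>s<length ns. \<exists>j. 2 \<le> j \<and> j \<le> ns ! s \<and> g \<in> Nset ns s j" by blast
  next
    assume "\<exists>s<length ns. \<exists>j. 2 \<le> j \<and> j \<le> ns ! s \<and> g \<in> Nset ns s j"
    then obtain s j where sj: "s < length ns" "2 \<le> j" "j \<le> ns ! s" "g \<in> Nset ns s j" by blast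
    then have "(j = ns ! s \<or> 2 \<le> j \<and> j < ns ! s) \<and> g \<in> Nset ns s j" "2 \<le> ns ! s" "s \<in> {0..<length ns}" by auto
    then show "\<exists>y\<in>{0..<length ns}. 2 \<le> ns ! y \<and> (\<exists>x. (x = ns ! y \<or> 2 \<le> x \<and> x < ns ! y) \<and> g \<in> Nset ns y x)"
      by blast
  qed
  finally show ?thesis .
qed

lemma Sm_iff:
  "g \<in> \<Union>(set (map (colgroup ns) (rev [0..<n]))) \<longleftrightarrow> (\<exists>J<n. g \<in> colgroup ns J)"
  by auto

theorem proposition4p13:
  fixes absv :: "'f::field \<Rightarrow> real" and p :: nat and ns :: "nat list"
    and sv :: "'k::field \<Rightarrow> 'v::ab_group_add \<Rightarrow> 'v" and tau :: "'f mat \<Rightarrow> 'v \<Rightarrow> 'v"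
    and sw :: "'k \<Rightarrow> 'w::ab_group_add \<Rightarrow> 'w" and rho :: "'f mat \<Rightarrow> 'w \<Rightarrow> 'w"
    and \<theta> :: "'f mat \<Rightarrow> 'k"
  assumes "nonarch_local_field absv p"
    and "alg_closed_field TYPE('k)"
    and "of_nat p \<noteq> (0::'k)"
    and "\<forall>i < length ns. 0 < ns ! i"
    and "smooth_representation absv ns sv tau"
    and "rep_M ns sw rho"
    and "subquotient ns sv tau sw rho"
    and "nondeg_character absv ns \<theta>"
    and "derivative_nonzero ns sw rho \<theta>"
  shows "derivative_nonzero ns sv tau \<theta>"
proof -
  let ?n = "sum_list ns"
  have nal: "nonarch_local_field absv p" and pk: "of_nat p \<noteq> (0::'k)" and smr: "smooth_representation absv ns sv tau"
    and repw: "rep_M ns sw rho" and sq: "subquotient ns sv tau sw rho" and nd: "nondeg_character absv ns \<theta>"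
    and dnz: "derivative_nonzero ns sw rho \<theta>" using assms by auto
  have mulabs: "\<forall>x y. absv (x*y) = absv x * absv y" and abs0: "\<forall>x. absv x = 0 \<longleftrightarrow> x = 0"
    and absnn: "\<forall>x. 0 \<le> absv x" and pl: "absv (of_nat p) < 1"
    using nal unfolding nonarch_local_field_def by auto
  have rep: "rep_M ns sv tau"
    and sm: "\<forall>v. \<exists>\<epsilon>>0. \<forall>g \<in> Mprime ns.
        (\<forall>i<?n. \<forall>j<?n. absv (g i j - mat_one ?n i j) < \<epsilon>) \<longrightarrow> tau g v = v"
    using smr unfolding smooth_representation_def by auto
  have nz: "\<forall>g \<in> Uset ns. \<theta> g \<noteq> 0"
    and thmul: "\<forall>g \<in> Uset ns. \<forall>h \<in> Uset ns. \<theta> (mat_mul ?n g h) = \<theta> g * \<theta> h"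
    and thsm: "\<exists>\<epsilon>>0. \<forall>g \<in> Uset ns. (\<forall>i<?n. \<forall>j<?n. absv (g i j - mat_one ?n i j) < \<epsilon>) \<longrightarrow> \<theta> g = 1"
    using nd unfolding nondeg_character_def Let_def by auto
  have vsv: "vector_space sv" and linM: "\<forall>g \<in> Mprime ns. Vector_Spaces.linear sv sv (tau g)"
    using rep unfolding rep_M_def by auto
  have vsw: "vector_space sw" and oner: "rho (mat_one ?n) = id" using repw unfolding rep_M_def by auto
  have onet: "tau (mat_one ?n) = id" using rep unfolding rep_M_def by auto
  obtain W1 W2 \<phi> where W: "module.subspace sv W1"
    and Wst: "\<forall>g \<in> Mprime ns. tau g ` W1 \<subseteq> W1"
    and add: "\<forall>x\<in>W1. \<forall>y\<in>W1. \<phi> (x + y) = \<phi> x + \<phi> y"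
    and scl: "\<forall>c. \<forall>x\<in>W1. \<phi> (sv c x) = sw c (\<phi> x)"
    and surj: "\<phi> ` W1 = UNIV"
    and equi: "\<forall>g \<in> Mprime ns. \<forall>x\<in>W1. \<phi> (tau g x) = rho g (\<phi> x)"
  proof -
    from sq[unfolded subquotient_def] obtain W1 W2 \<phi> where all:
      "module.subspace sv W1 \<and> module.subspace sv W2 \<and> W2 \<subseteq> W1 \<and>
       (\<forall>g \<in> Mprime ns. tau g ` W1 \<subseteq> W1 \<and> tau g ` W2 \<subseteq> W2) \<and>
       (\<forall>x\<in>W1. \<forall>y\<in>W1. \<phi> (x + y) = \<phi> x + \<phi> y) \<and>
       (\<forall>c. \<forall>x\<in>W1. \<phi> (sv c x) = sw c (\<phi> x)) \<and>
       \<phi> ` W1 = UNIV \<and> (\<forall>x\<in>W1. \<phi> x = 0 \<longleftrightarrow> x \<in> W2) \<and>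
       (\<forall>g \<in> Mprime ns. \<forall>x\<in>W1. \<phi> (tau g x) = rho g (\<phi> x))"
      by (elim exE)
    show ?thesis
    proof (rule that)
      show "module.subspace sv W1" using all by (elim conjE)
      show "\<forall>g \<in> Mprime ns. tau g ` W1 \<subseteq> W1" using all by (elim conjE) blast
      show "\<forall>x\<in>W1. \<forall>y\<in>W1. \<phi> (x + y) = \<phi> x + \<phi> y" using all by (elim conjE)
      show "\<forall>c. \<forall>x\<in>W1. \<phi> (sv c x) = sw c (\<phi> x)" using all by (elim conjE)
      show "\<phi> ` W1 = UNIV" using all by (elim conjE)
      show "\<forall>g \<in> Mprime ns. \<forall>x\<in>W1. \<phi> (tau g x) = rho g (\<phi> x)" using all by (elim conjE)
    qed
  qed
  interpret E: exloc sv tau \<theta> using vsv unfolding exloc_def .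
  interpret F: exloc sw rho \<theta> using vsw unfolding exloc_def .
  have th1: "\<theta> (mat_one ?n) = 1" using theta_one[OF nz thmul] .
  define Cs :: "'f mat set list" where "Cs = map (colgroup ns) (rev [0..<?n])"
  define Sd :: "'f mat set" where "Sd = \<Union>(set (deriv_groups ns))"
  have Sm: "\<Union>(set Cs) = {g. \<exists>J<?n. g \<in> colgroup ns J}" unfolding Cs_def using Sm_iff by blast
  have SdSm: "Sd \<subseteq> \<Union>(set Cs)"
  proof
    fix g assume "g \<in> Sd"
    then obtain s j where sj: "s < length ns" "2 \<le> j" "j \<le> ns ! s" "g \<in> Nset ns s j"
      unfolding Sd_def Sd_iff by blast
    then show "g \<in> \<Union>(set Cs)" unfolding Sm using Nset_sub[OF sj(1-3)] by blast
  qed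
  have SmSd: "\<Union>(set Cs) \<subseteq> insert (mat_one ?n) Sd"
  proof
    fix g assume "g \<in> \<Union>(set Cs)"
    then obtain J where J: "J < ?n" "g \<in> colgroup ns J" unfolding Sm by blast
    show "g \<in> insert (mat_one ?n) Sd" using colgroup_sub[OF J(2) J(1)] Sd_iff[of g ns] unfolding Sd_def by blast
  qed
  have SdM: "Sd \<subseteq> Mprime ns"
  proof
    fix g assume "g \<in> Sd"
    then obtain J where "J < ?n" "g \<in> colgroup ns J" using SdSm unfolding Sm by blast
    then show "g \<in> Mprime ns" using colgroup_Uset Uset_Mprime by blast
  qed
  have abs_all: "\<forall>C\<in>set Cs. E.abel C W1"
    unfolding Cs_def using abel_col[OF rep sm nz thmul thsm mulabs abs0 absnn pl pk Wst] by auto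
  have nzs: "\<forall>i j. i < j \<and> j < length Cs \<longrightarrow> E.normz (Cs!j) (Cs!i)"
  proof (intro allI impI)
    fix i j assume ij: "i < j \<and> j < length Cs"
    then have jl: "j < ?n" "i < ?n" unfolding Cs_def by auto
    have "Cs ! j = colgroup ns (?n - Suc j)" unfolding Cs_def by (rule colgroups_nth[OF jl(1)])
    moreover have "Cs ! i = colgroup ns (?n - Suc i)" unfolding Cs_def by (rule colgroups_nth[OF jl(2)])
    moreover have "?n - Suc j < ?n - Suc i" "?n - Suc i < ?n" using ij unfolding Cs_def by auto
    ultimately show "E.normz (Cs!j) (Cs!i)" using normz_col[OF rep nz thmul] by metis
  qed
  have z0: "E.subspace {0}" by simp
  have z0st: "\<forall>C\<in>set Cs. \<forall>g\<in>C. tau g ` {0} \<subseteq> {0}"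
  proof (intro ballI)
    fix C g assume "C \<in> set Cs" "g \<in> C"
    then obtain J where "g \<in> colgroup ns J" unfolding Cs_def by auto
    then have "g \<in> Mprime ns" using colgroup_Uset Uset_Mprime by blast
    then show "tau g ` {0} \<subseteq> {0}" using linM E.lin_zero by auto
  qed
  show ?thesis
  proof (rule ccontr)
    assume "\<not> derivative_nonzero ns sv tau \<theta>"
    then have KV: "E.span (E.gens Sd UNIV) = UNIV"
      unfolding derivative_nonzero_def dk[OF vsv] Sd_def by simp
    have "w \<in> F.span (F.gens Sd UNIV)" for w
    proof -
      obtain x where x: "x \<in> W1" "\<phi> x = w" using surj by (metis UNIV_I imageE)
      have "x \<in> E.span (E.gens (\<Union>(set Cs)) UNIV)"
        using KV E.span_mono[of "E.gens Sd UNIV" "E.gens (\<Union>(set Cs)) UNIV"] SdSm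
        unfolding E.gens_def by blast
      then obtain k z' where kz: "k \<in> E.span (E.gens (\<Union>(set Cs)) W1)" "z' \<in> {0}" "x = k + z'"
        using E.list_exact[OF W abs_all nzs z0 z0st x(1) _ _, of x 0] by auto
      then have xk: "x \<in> E.span (E.gens (\<Union>(set Cs)) W1)" by simp
      have "E.gens (\<Union>(set Cs)) W1 \<subseteq> E.span (E.gens Sd W1)"
      proof
        fix v assume "v \<in> E.gens (\<Union>(set Cs)) W1"
        then obtain g a where ga: "g \<in> \<Union>(set Cs)" "a \<in> W1" "v = tau g a - sv (\<theta> g) a"
          unfolding E.gens_def by blast
        show "v \<in> E.span (E.gens Sd W1)"
        proof (cases "g = mat_one ?n")
          case True then show ?thesis using ga onet th1 E.span_zero by simp
        next
          case False
          then have "g \<in> Sd" using SmSd ga(1) by blast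
          then show ?thesis using ga unfolding E.gens_def by (blast intro: E.span_base)
        qed
      qed
      then have "x \<in> E.span (E.gens Sd W1)" using xk E.span_minimal[OF _ E.subspace_span] by blast
      moreover have "E.gens Sd W1 \<subseteq> W1"
      proof
        fix v assume "v \<in> E.gens Sd W1"
        then obtain g a where ga: "g \<in> Sd" "a \<in> W1" "v = tau g a - sv (\<theta> g) a"
          unfolding E.gens_def by blast
        have "tau g a \<in> W1" using Wst SdM ga by blast
        then show "v \<in> W1" using ga E.subspace_diff[OF W] E.subspace_scale[OF W] by simp
      qed
      moreover have "\<phi> ` E.gens Sd W1 \<subseteq> F.span (F.gens Sd UNIV)"
      proof
        fix u assume "u \<in> \<phi> ` E.gens Sd W1"
        then obtain g a where ga: "g \<in> Sd" "a \<in> W1" "u = \<phi> (tau g a - sv (\<theta> g) a)"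
          unfolding E.gens_def by blast
        have ta: "tau g a \<in> W1" using Wst SdM ga by blast
        have sa: "sv (\<theta> g) a \<in> W1" using E.subspace_scale[OF W ga(2)] .
        have df: "tau g a - sv (\<theta> g) a \<in> W1" using E.subspace_diff[OF W ta sa] .
        have "\<phi> (tau g a) = \<phi> (tau g a - sv (\<theta> g) a) + \<phi> (sv (\<theta> g) a)"
          using add df sa by (metis diff_add_cancel)
        then have "u = \<phi> (tau g a) - \<phi> (sv (\<theta> g) a)" using ga(3) by simp
        also have "\<dots> = rho g (\<phi> a) - sw (\<theta> g) (\<phi> a)" using equi SdM ga scl by auto
        finally have "u \<in> F.gens Sd UNIV" unfolding F.gens_def using ga(1) by blast
        then show "u \<in> F.span (F.gens Sd UNIV)" by (rule F.span_base)
      qed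
      ultimately have "\<phi> x \<in> F.span (F.gens Sd UNIV)"
        using phi_span[OF vsv vsw W add scl] by blast
      then show ?thesis using x by simp
    qed
    then have "deriv_kernel sw rho \<theta> (deriv_groups ns) = UNIV"
      unfolding dk[OF vsw] Sd_def by blast
    then show False using dnz unfolding derivative_nonzero_def by simp
  qed
qed

end
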